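(* Let $G$ be a finite simple graph and $v$ a vertex of $G$ of degree $d$. Then \[-d\le \mathrm{mur}(G)-\mathrm{mur}(G\setminus\{v\})\le d+2,\] where $G\setminus\{v\}$ is the graph obtained from $G$ by deleting $v$ and its incident edges.
   Context: For a finite simple undirected graph $G$ on vertices $v_1,\dots,v_n$, let $A_G$ be its $(0,1)$-adjacency matrix, $D_G=\mathrm{diag}(d_1,\dots,d_n)$ with $d_i$ the degree of $v_i$, $I$ the $n\times n$ identity matrix and $J$ the $n\times n$ all-ones matrix. A universal adjacency matrix of $G$ is any matrix $\alpha A_G+\beta I+\gamma J+\delta D_G$ with real scalars $\alpha,\beta,\gamma,\delta$ and $\alpha\neq 0$. The minimum universal rank $\mathrm{mur}(G)$ is the minimum rank over all universal adjacency matrices of $G$. *)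

theory Defs
  imports "Jordan_Normal_Form.DL_Rank"
begin

text \<open>Vertices are of a linearly ordered
  type so that they can be enumerated (sorted) to index matrix rows/columns;
  rank does not depend on this enumeration.\<close>

definition simple_graph :: "'a set \<Rightarrow> ('a \<Rightarrow> 'a \<Rightarrow> bool) \<Rightarrow> bool" where
  "simple_graph V E \<longleftrightarrow> finite V \<and> (\<forall>x y. E x y \<longrightarrow> x \<in> V \<and> y \<in> V)
     \<and> (\<forall>x y. E x y \<longrightarrow> E y x) \<and> (\<forall>x. \<not> E x x)"

definition degree :: "'a set \<Rightarrow> ('a \<Rightarrow> 'a \<Rightarrow> bool) \<Rightarrow> 'a \<Rightarrow> nat" where
  "degree V E x = card {u \<in> V. E x u}"

definition univ_adj_matrix ::
  "('a::linorder) set \<Rightarrow> ('a \<Rightarrow> 'a \<Rightarrow> bool) \<Rightarrow> real \<Rightarrow> real \<Rightarrow> real \<Rightarrow> real \<Rightarrow> real mat" where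
  "univ_adj_matrix V E \<alpha> \<beta> \<gamma> \<delta> =
     (let vs = sorted_list_of_set V in
      mat (card V) (card V) (\<lambda>(i, j).
        \<alpha> * (if E (vs ! i) (vs ! j) then 1 else 0)
        + \<beta> * (if i = j then 1 else 0)
        + \<gamma>
        + \<delta> * (if i = j then real (degree V E (vs ! i)) else 0)))"

definition mur :: "('a::linorder) set \<Rightarrow> ('a \<Rightarrow> 'a \<Rightarrow> bool) \<Rightarrow> nat" where
  "mur V E = Min {vec_space.rank (card V) (univ_adj_matrix V E \<alpha> \<beta> \<gamma> \<delta>)
                   | \<alpha> \<beta> \<gamma> \<delta>. \<alpha> \<noteq> 0}"

definition del_vertex_V :: "'a set \<Rightarrow> 'a \<Rightarrow> 'a set" where
  "del_vertex_V V v = V - {v}"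

definition del_vertex_E :: "('a \<Rightarrow> 'a \<Rightarrow> bool) \<Rightarrow> 'a \<Rightarrow> 'a \<Rightarrow> 'a \<Rightarrow> bool" where
  "del_vertex_E E v = (\<lambda>x y. E x y \<and> x \<noteq> v \<and> y \<noteq> v)"

end

theory Submission
  imports Defs
begin

context vec_space begin

lemma rank_le_of_cols_in_span:
  assumes A: "A \<in> carrier_mat n a" and B: "B \<in> carrier_mat n b"
    and sub: "set (cols A) \<subseteq> span (set (cols B))"
  shows "rank A \<le> rank B"
proof -
  define W where "W = span (set (cols B))"
  have cB: "set (cols B) \<subseteq> carrier_vec n" using B cols_dim by blast
  have cA: "set (cols A) \<subseteq> carrier_vec n" using A cols_dim by blast
  have sW: "subspace class_ring W V" unfolding W_def using span_is_subspace cB by auto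
  have "span (set (cols A)) \<subseteq> W"
    using sub unfolding W_def by (simp add: cB span_is_subset span_is_submodule)
  moreover have "subspace class_ring (span (set (cols A))) V" using span_is_subspace cA by auto
  ultimately have sub2: "subspace class_ring (span (set (cols A))) (vs W)"
    using nested_subspaces sW by blast
  have fW: "vectorspace.fin_dim class_ring (vs W)" unfolding W_def using fin_dim_span_cols B by blast
  have fA: "vectorspace.fin_dim class_ring (span_vs (set (cols A)))" using fin_dim_span_cols A by blast
  have "rank A \<le> vectorspace.dim class_ring (vs W)" unfolding rank_def
    using vectorspace.subspace_dim[OF subspace_is_vs[OF sW] sub2 fW] fA by auto
  then show ?thesis unfolding rank_def W_def .
qed

lemma mult_vec_in_span:
  assumes B: "B \<in> carrier_mat n k" and v: "v \<in> carrier_vec k"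
  shows "B *\<^sub>v v \<in> span (set (cols B))"
proof -
  have cB: "set (cols B) \<subseteq> carrier_vec n" using B cols_dim by blast
  have sm: "submodule class_ring (span (set (cols B))) V" using span_is_submodule cB by auto
  define w where "w m = vec n (\<lambda>r. \<Sum>i<m. B $$ (r,i) * v $ i)" for m
  have "m \<le> k \<Longrightarrow> w m \<in> span (set (cols B))" for m
  proof (induction m)
    case 0
    have "w 0 = 0\<^sub>v n" unfolding w_def by auto
    then show ?case using submodule.zero_closed[OF sm] by simp
  next
    case (Suc m)
    have cm: "col B m \<in> span (set (cols B))"
      using span_mem[OF cB] Suc.prems B by (metis Suc_le_lessD carrier_matD(2) cols_length cols_nth nth_mem)
    have "w (Suc m) = w m + v $ m \<cdot>\<^sub>v col B m" unfolding w_def using B by (auto simp: col_def)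
    then show ?case using Suc submodule.m_closed[OF sm] submodule.smult_closed[OF sm] cm by simp
  qed
  moreover have "w k = B *\<^sub>v v" unfolding w_def using B v
    by (auto simp: mult_mat_vec_def scalar_prod_def intro!: sum.cong simp: atLeast0LessThan)
  ultimately show ?thesis by (metis order_refl)
qed

lemma rank_mult_le_inner:
  assumes B: "B \<in> carrier_mat n k" and C: "C \<in> carrier_mat k m"
  shows "rank (B * C) \<le> k"
proof -
  have "set (cols (B * C)) \<subseteq> span (set (cols B))"
  proof
    fix x assume "x \<in> set (cols (B * C))"
    then obtain j where j: "j < m" "x = col (B * C) j" using B C
      by (metis carrier_matD(2) cols_length cols_nth in_set_conv_nth index_mult_mat(3))
    have "x = B *\<^sub>v col C j" using j(2) col_mult2[OF B C j(1)] by (rule trans)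
    then show "x \<in> span (set (cols B))" using mult_vec_in_span[OF B] C j by auto
  qed
  then have "rank (B * C) \<le> rank B" using rank_le_of_cols_in_span[OF _ B] B C by (meson mult_carrier_mat)
  also have "\<dots> \<le> k" using rank_le_nc[OF B] .
  finally show ?thesis .
qed

lemma rank_factor:
  assumes A: "A \<in> carrier_mat n m"
  shows "\<exists>B C. B \<in> carrier_mat n (rank A) \<and> C \<in> carrier_mat (rank A) m \<and> A = B * C"
proof -
  define W where "W = span (set (cols A))"
  have cA: "set (cols A) \<subseteq> carrier_vec n" using A cols_dim by blast
  have sW: "subspace class_ring W V" unfolding W_def using span_is_subspace cA by auto
  have smW: "submodule class_ring W V" unfolding W_def using span_is_submodule cA by auto
  have vsW: "vectorspace class_ring (vs W)" using subspace_is_vs[OF sW] .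
  have fW: "vectorspace.fin_dim class_ring (vs W)" unfolding W_def using fin_dim_span_cols A by blast
  obtain \<beta> where fb: "finite \<beta>" and bas: "vectorspace.basis class_ring (vs W) \<beta>"
    using vectorspace.finite_basis_exists[OF vsW fW] by blast
  have dimW: "rank A = card \<beta>" unfolding rank_def W_def[symmetric]
    using vectorspace.dim_basis[OF vsW fb bas] .
  have bW: "\<beta> \<subseteq> W" and gen: "LinearCombinations.module.span class_ring (vs W) \<beta> = W"
    using bas unfolding vectorspace.basis_def[OF vsW] by auto
  have spanb: "span \<beta> = W" using gen span_li_not_depend(1)[OF bW smW] by simp
  have bc: "\<beta> \<subseteq> carrier_vec n" using bW submodule.subset[OF smW] by auto
  obtain xs where xs: "set xs = \<beta>" "distinct xs" using finite_distinct_list[OF fb] by blast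
  define r where "r = length xs"
  have r: "r = rank A" unfolding r_def dimW using xs distinct_card by metis
  define B where "B = mat_of_cols n xs"
  have B: "B \<in> carrier_mat n r" unfolding B_def r_def by simp
  have colsB: "cols B = xs" unfolding B_def using xs bc by simp
  have "\<forall>j<m. \<exists>a. lincomb a \<beta> = col A j"
  proof (intro allI impI)
    fix j assume j: "j < m"
    have "col A j \<in> set (cols A)" using A j by (metis carrier_matD(2) cols_length cols_nth nth_mem)
    then have "col A j \<in> span \<beta>" using spanb unfolding W_def using span_mem[OF cA] by auto
    then show "\<exists>a. lincomb a \<beta> = col A j" using finite_in_span[OF fb _] bc by auto
  qed
  define cf where "cf j = (SOME a. lincomb a \<beta> = col A j)" for j
  have cf: "lincomb (cf j) \<beta> = col A j" if "j < m" for j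
  proof -
    have "\<exists>a. lincomb a \<beta> = col A j" using that \<open>\<forall>j<m. \<exists>a. lincomb a \<beta> = col A j\<close> by blast
    then show ?thesis unfolding cf_def by (rule someI_ex)
  qed
  define C where "C = mat r m (\<lambda>(i,j). cf j (xs ! i))"
  have C: "C \<in> carrier_mat r m" unfolding C_def by simp
  have "A = B * C"
  proof (rule eq_matI)
    show "dim_row A = dim_row (B * C)" "dim_col A = dim_col (B * C)" using A B C by auto
    fix i j assume i: "i < dim_row (B * C)" and j: "j < dim_col (B * C)"
    have i': "i < n" and j': "j < m" using i j B C by auto
    have colC: "col C j = vec r (\<lambda>i. cf j (col B i))"
    proof (rule eq_vecI)
      show "dim_vec (col C j) = dim_vec (vec r (\<lambda>i. cf j (col B i)))" using C by simp
      fix i assume "i < dim_vec (vec r (\<lambda>i. cf j (col B i)))"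
      then have ir: "i < r" by simp
      have "col B i = xs ! i" using colsB B ir by (metis carrier_matD(2) cols_nth)
      then show "col C j $ i = vec r (\<lambda>i. cf j (col B i)) $ i"
        using ir j' C unfolding C_def by simp
    qed
    have "col (B * C) j = B *\<^sub>v col C j" by (rule col_mult2[OF B C j'])
    also have "\<dots> = lincomb (cf j) (set (cols B))" unfolding colC
      using mat_mult_eq_lincomb[OF B] colsB xs by simp
    also have "\<dots> = col A j" using cf[OF j'] colsB xs by simp
    finally have "col (B * C) j = col A j" .
    then show "A $$ (i, j) = (B * C) $$ (i, j)" using i' j' A B C
      by (metis carrier_matD col_def index_vec i j)
  qed
  then show ?thesis using B C r by blast
qed

end

lemma rank_reindex:
  fixes A :: "'a::field mat"
  assumes A: "A \<in> carrier_mat n n'" and f: "\<forall>i<m. u i \<noteq> 0 \<longrightarrow> f i < n"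
    and g: "\<forall>j<m'. w j \<noteq> 0 \<longrightarrow> g j < n'"
  shows "vec_space.rank m (mat m m' (\<lambda>(i,j). u i * w j * A $$ (f i, g j))) \<le> vec_space.rank n A"
proof -
  define r where "r = vec_space.rank n A"
  obtain B C where B: "B \<in> carrier_mat n r" and C: "C \<in> carrier_mat r n'" and BC: "A = B * C"
    using vec_space.rank_factor[OF A] unfolding r_def by blast
  define B' where "B' = mat m r (\<lambda>(i,l). u i * B $$ (f i, l))"
  define C' where "C' = mat r m' (\<lambda>(l,j). w j * C $$ (l, g j))"
  have B': "B' \<in> carrier_mat m r" and C': "C' \<in> carrier_mat r m'" unfolding B'_def C'_def by auto
  have eq: "mat m m' (\<lambda>(i,j). u i * w j * A $$ (f i, g j)) = B' * C'"
  proof (rule eq_matI)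
    fix i j assume i: "i < dim_row (B' * C')" and j: "j < dim_col (B' * C')"
    then have i': "i < m" and j': "j < m'" using B' C' by auto
    have "(B' * C') $$ (i,j) = (\<Sum>l<r. (u i * B $$ (f i, l)) * (w j * C $$ (l, g j)))"
      using i' j' B' C' unfolding B'_def C'_def
      by (simp add: scalar_prod_def atLeast0LessThan)
    also have "\<dots> = u i * w j * (\<Sum>l<r. B $$ (f i, l) * C $$ (l, g j))"
      by (simp add: sum_distrib_left algebra_simps)
    also have "\<dots> = u i * w j * A $$ (f i, g j)"
    proof (cases "u i = 0 \<or> w j = 0")
      case True then show ?thesis by auto
    next
      case False
      then have "f i < n" "g j < n'" using f g i' j' by auto
      then have "A $$ (f i, g j) = (\<Sum>l<r. B $$ (f i, l) * C $$ (l, g j))"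
        unfolding BC using B C by (simp add: scalar_prod_def atLeast0LessThan)
      then show ?thesis by simp
    qed
    finally show "mat m m' (\<lambda>(i,j). u i * w j * A $$ (f i, g j)) $$ (i,j) = (B' * C') $$ (i,j)"
      using i' j' by simp
  qed (use B' C' in auto)
  show ?thesis unfolding eq r_def[symmetric] using vec_space.rank_mult_le_inner[OF B' C'] .
qed

definition diagS :: "nat \<Rightarrow> nat set \<Rightarrow> 'a::field \<Rightarrow> 'a mat" where
  "diagS m S c = mat m m (\<lambda>(i,j). if i = j \<and> i \<in> S then c else 0)"

lemma rank_diagS:
  assumes "finite S"
  shows "vec_space.rank m (diagS m S (c::'a::field)) \<le> card S"
  using assms
proof (induction S rule: finite_induct)
  case empty
  have "diagS m {} c = 0\<^sub>m m m" unfolding diagS_def by (rule eq_matI) auto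
  then show ?case using vec_space.rank_0I by simp
next
  case (insert x S)
  have eq: "diagS m (insert x S) c = diagS m S c + diagS m {x} c"
    unfolding diagS_def by (rule eq_matI) (use insert.hyps in auto)
  have "vec_space.rank m (diagS m {x} c) \<le> 1"
    by (rule vec_space.rank_le_1_product_entries[where f="\<lambda>r. if r = x then c else 0"
        and g="\<lambda>j. if j = x then 1 else 0" and nc = m]) (auto simp: diagS_def)
  moreover have "vec_space.rank m (diagS m (insert x S) c) \<le> vec_space.rank m (diagS m S c) + vec_space.rank m (diagS m {x} c)"
    unfolding eq by (rule vec_space.rank_subadditive) (auto simp: diagS_def)
  ultimately show ?case using insert by simp
qed


lemma uam_carrier: "univ_adj_matrix V E \<alpha> \<beta> \<gamma> \<delta> \<in> carrier_mat (card V) (card V)"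
  unfolding univ_adj_matrix_def Let_def by simp

lemma uam_index: "a < card V \<Longrightarrow> b < card V \<Longrightarrow> univ_adj_matrix V E \<alpha> \<beta> \<gamma> \<delta> $$ (a,b) =
   \<alpha> * (if E (sorted_list_of_set V ! a) (sorted_list_of_set V ! b) then 1 else 0)
        + \<beta> * (if a = b then 1 else 0) + \<gamma>
        + \<delta> * (if a = b then real (degree V E (sorted_list_of_set V ! a)) else 0)"
  unfolding univ_adj_matrix_def Let_def by simp

lemma key_ranks:
  fixes V :: "'a::linorder set" and \<alpha> \<beta> \<gamma> \<delta> :: real
  assumes G: "simple_graph V E" and vV: "v \<in> V" and d: "d = degree V E v"
  defines "M \<equiv> univ_adj_matrix V E \<alpha> \<beta> \<gamma> \<delta>"
    and "M' \<equiv> univ_adj_matrix (del_vertex_V V v) (del_vertex_E E v) \<alpha> \<beta> \<gamma> \<delta>"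
  shows "vec_space.rank (card (del_vertex_V V v)) M' \<le> vec_space.rank (card V) M + d"
    and "vec_space.rank (card V) M \<le> vec_space.rank (card (del_vertex_V V v)) M' + d + 2"
proof -
  define n where "n = card V"
  define V' where "V' = del_vertex_V V v"
  define E' where "E' = del_vertex_E E v"
  have fin: "finite V" using G unfolding simple_graph_def by auto
  have sym: "\<And>x y. E x y \<Longrightarrow> E y x" and irr: "\<And>x. \<not> E x x" and EV: "\<And>x y. E x y \<Longrightarrow> x \<in> V \<and> y \<in> V"
    using G unfolding simple_graph_def by auto
  define vs where "vs = sorted_list_of_set V"
  define vs' where "vs' = sorted_list_of_set V'"
  have cV': "card V' = n - 1" unfolding V'_def del_vertex_V_def n_def using fin vV by simp
  have lvs: "length vs = n" "distinct vs" "set vs = V" unfolding vs_def n_def using fin by auto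
  have lvs': "length vs' = n - 1" "distinct vs'" "set vs' = V'" unfolding vs'_def V'_def del_vertex_V_def
    using fin cV' by (auto simp: V'_def del_vertex_V_def)
  obtain xs ys where split: "vs = xs @ v # ys" using lvs vV by (metis split_list)
  define p where "p = length xs"
  have vxs: "v \<notin> set xs" "v \<notin> set ys" using lvs(2) split by auto
  have vs': "vs' = xs @ ys"
  proof -
    have "vs' = remove1 v vs" unfolding vs'_def vs_def V'_def del_vertex_V_def
      using sorted_list_of_set_remove[OF fin] by simp
    then show ?thesis using split vxs by (simp add: remove1_append)
  qed
  have n: "n = Suc (length xs + length ys)" using lvs split by simp
  have pn: "p < n" using n p_def by simp
  define s where "s i = (if i < p then i else Suc i)" for i
  define t where "t a = (if a < p then a else a - 1)" for a
  have s_lt: "i < n - 1 \<Longrightarrow> s i < n" for i using s_def by auto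
  have s_ne: "s i \<noteq> p" for i using s_def by auto
  have s_inj: "s i = s j \<longleftrightarrow> i = j" for i j using s_def by auto
  have vs'_nth: "i < n - 1 \<Longrightarrow> vs' ! i = vs ! s i" for i
    unfolding vs' split s_def p_def using n by (auto simp: nth_append)
  have st: "a < n \<Longrightarrow> a \<noteq> p \<Longrightarrow> s (t a) = a \<and> t a < n - 1" for a
    using pn unfolding s_def t_def by auto
  have vs'_in: "i < n - 1 \<Longrightarrow> vs' ! i \<in> V \<and> vs' ! i \<noteq> v" for i
    using lvs' by (metis DiffE V'_def del_vertex_V_def insertI1 nth_mem)
  have deg: "real (degree V E (vs' ! i)) = real (degree V' E' (vs' ! i)) + (if E v (vs' ! i) then 1 else 0)"
    if i: "i < n - 1" for i
  proof -
    let ?u = "vs' ! i"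
    have u: "?u \<in> V" "?u \<noteq> v" using vs'_in[OF i] by auto
    have eq: "{w \<in> V'. E' ?u w} = {w \<in> V. E ?u w} - {v}"
      unfolding V'_def E'_def del_vertex_V_def del_vertex_E_def using u by auto
    have f: "finite {w \<in> V. E ?u w}" using fin by simp
    have "E v ?u \<longleftrightarrow> v \<in> {w \<in> V. E ?u w}" using sym vV by auto
    show ?thesis
    proof (cases "E v ?u")
      case True
      then have "v \<in> {w \<in> V. E ?u w}" using \<open>E v ?u \<longleftrightarrow> v \<in> {w \<in> V. E ?u w}\<close> by blast
      then have "card {w \<in> V. E ?u w} = Suc (card ({w \<in> V. E ?u w} - {v}))" by (rule card.remove[OF f])
      then show ?thesis unfolding degree_def eq using True by simp
    next
      case False
      then have "v \<notin> {w \<in> V. E ?u w}" using \<open>E v ?u \<longleftrightarrow> v \<in> {w \<in> V. E ?u w}\<close> by blast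
      then show ?thesis unfolding degree_def eq using False by simp
    qed
  qed
  define S where "S = {i. i < n - 1 \<and> E v (vs' ! i)}"
  have finS: "finite S" unfolding S_def by simp
  have cardS: "card S = d"
  proof -
    have inj: "inj_on (nth vs') S" using lvs' unfolding S_def by (auto simp: inj_on_def nth_eq_iff_index_eq)
    have "nth vs' ` S = {u \<in> V. E v u}"
    proof
      show "nth vs' ` S \<subseteq> {u \<in> V. E v u}" using vs'_in unfolding S_def by auto
      show "{u \<in> V. E v u} \<subseteq> nth vs' ` S"
      proof
        fix u assume u: "u \<in> {u \<in> V. E v u}"
        then have "u \<in> V'" using irr unfolding V'_def del_vertex_V_def by auto
        then obtain i where "i < n - 1" "vs' ! i = u" using lvs' by (metis in_set_conv_nth)
        then show "u \<in> nth vs' ` S" using u unfolding S_def by auto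
      qed
    qed
    then show ?thesis using card_image[OF inj] d unfolding degree_def by simp
  qed
  have M: "M \<in> carrier_mat n n" unfolding M_def n_def by (rule uam_carrier)
  have M': "M' \<in> carrier_mat (n - 1) (n - 1)" unfolding M'_def using uam_carrier cV' V'_def by metis
  define Sub where "Sub = mat (n - 1) (n - 1) (\<lambda>(i,j). (\<lambda>_. 1) i * (\<lambda>_. 1) j * M $$ (s i, s j))"
  have Sub: "Sub \<in> carrier_mat (n - 1) (n - 1)" unfolding Sub_def by simp
  have rSub: "vec_space.rank (n - 1) Sub \<le> vec_space.rank n M"
    unfolding Sub_def by (rule rank_reindex[OF M]) (use s_lt in auto)
  have SubE: "Sub $$ (i,j) = M' $$ (i,j) + diagS (n - 1) S \<delta> $$ (i,j)" if "i < n - 1" "j < n - 1" for i j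
  proof -
    have "Sub $$ (i,j) = M $$ (s i, s j)" unfolding Sub_def using that by simp
    also have "\<dots> = M' $$ (i,j) + diagS (n - 1) S \<delta> $$ (i,j)"
    proof -
      have e1: "vs ! s i = vs' ! i" "vs ! s j = vs' ! j" using vs'_nth that by auto
      have hE: "E' (vs'!i) (vs'!j) = E (vs'!i) (vs'!j)"
        unfolding E'_def del_vertex_E_def using vs'_in that by auto
      have hM: "M $$ (s i, s j) = \<alpha> * (if E (vs'!i) (vs'!j) then 1 else 0) + \<beta> * (if i = j then 1 else 0) + \<gamma>
          + \<delta> * (if i = j then real (degree V E (vs'!i)) else 0)"
        unfolding M_def using uam_index[of "s i" V "s j" E] s_lt that e1 s_inj
        unfolding n_def vs_def by auto
      have hM': "M' $$ (i,j) = \<alpha> * (if E (vs'!i) (vs'!j) then 1 else 0) + \<beta> * (if i = j then 1 else 0) + \<gamma>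
          + \<delta> * (if i = j then real (degree V' E' (vs'!i)) else 0)"
        unfolding M'_def using uam_index[of i V' j E'] that cV' hE
        unfolding V'_def E'_def vs'_def by auto
      have hD: "diagS (n - 1) S \<delta> $$ (i,j) = (if i = j \<and> E v (vs'!i) then \<delta> else 0)"
        unfolding diagS_def S_def using that by auto
      show ?thesis unfolding hM hM' hD using deg[OF that(1)] by (auto simp: algebra_simps)
    qed
    finally show ?thesis .
  qed
  have D: "diagS (n - 1) S c \<in> carrier_mat (n - 1) (n - 1)" for c :: real unfolding diagS_def by simp
  have rD: "vec_space.rank (n - 1) (diagS (n - 1) S c) \<le> d" for c :: real
    using rank_diagS[OF finS] cardS by metis
  have cn: "card (del_vertex_V V v) = n - 1" "card V = n" using cV' V'_def n_def by auto
  have M'eq: "M' = Sub + diagS (n - 1) S (- \<delta>)"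
  proof (rule eq_matI)
    fix i j assume "i < dim_row (Sub + diagS (n - 1) S (- \<delta>))" "j < dim_col (Sub + diagS (n - 1) S (- \<delta>))"
    then have ij: "i < n - 1" "j < n - 1" using Sub D[of "- \<delta>"] by auto
    show "M' $$ (i,j) = (Sub + diagS (n - 1) S (- \<delta>)) $$ (i,j)"
      using SubE[OF ij] ij Sub D[of "- \<delta>"] by (auto simp: diagS_def)
  qed (use M' Sub D[of "- \<delta>"] in auto)
  have SubM': "Sub = M' + diagS (n - 1) S \<delta>"
  proof (rule eq_matI)
    fix i j assume "i < dim_row (M' + diagS (n - 1) S \<delta>)" "j < dim_col (M' + diagS (n - 1) S \<delta>)"
    then have ij: "i < n - 1" "j < n - 1" using M' D[of \<delta>] by auto
    show "Sub $$ (i,j) = (M' + diagS (n - 1) S \<delta>) $$ (i,j)"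
      using SubE[OF ij] ij M' D[of \<delta>] by simp
  qed (use M' Sub D[of \<delta>] in auto)
  have "vec_space.rank (n - 1) M' \<le> vec_space.rank (n - 1) Sub + vec_space.rank (n - 1) (diagS (n - 1) S (- \<delta>))"
    unfolding M'eq by (rule vec_space.rank_subadditive[OF Sub D])
  then show "vec_space.rank (card (del_vertex_V V v)) M' \<le> vec_space.rank (card V) M + d"
    unfolding cn using rSub rD[of "- \<delta>"] by linarith
  have rSub2: "vec_space.rank (n - 1) Sub \<le> vec_space.rank (n - 1) M' + d"
    using vec_space.rank_subadditive[OF M' D, of \<delta>] rD[of \<delta>] unfolding SubM'[symmetric] by linarith
  define u where "u a = (if a = p then 0 else (1::real))" for a
  define X where "X = mat n n (\<lambda>(a,b). u a * u b * Sub $$ (t a, t b))"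
  define Y where "Y = mat n n (\<lambda>(a,b). (if a = p then 1 else 0) * M $$ (p, b))"
  define Z where "Z = mat n n (\<lambda>(a,b). (if a = p then 0 else M $$ (a, p)) * (if b = p then 1 else (0::real)))"
  have X: "X \<in> carrier_mat n n" and Y: "Y \<in> carrier_mat n n" and Z: "Z \<in> carrier_mat n n"
    unfolding X_def Y_def Z_def by auto
  have rX: "vec_space.rank n X \<le> vec_space.rank (n - 1) Sub"
    unfolding X_def by (rule rank_reindex[OF Sub]) (use st u_def in auto)
  have rY: "vec_space.rank n Y \<le> 1"
    by (rule vec_space.rank_le_1_product_entries[where f="\<lambda>a. if a = p then 1 else 0"
        and g="\<lambda>b. M $$ (p, b)" and nc = n]) (auto simp: Y_def)
  have rZ: "vec_space.rank n Z \<le> 1"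
    by (rule vec_space.rank_le_1_product_entries[where f="\<lambda>a. if a = p then 0 else M $$ (a, p)"
        and g="\<lambda>b. if b = p then 1 else 0" and nc = n]) (auto simp: Z_def)
  have Meq: "M = X + Y + Z"
  proof (rule eq_matI)
    fix a b assume "a < dim_row (X + Y + Z)" "b < dim_col (X + Y + Z)"
    then have ab: "a < n" "b < n" using X Z by auto
    have "X $$ (a,b) + Y $$ (a,b) + Z $$ (a,b) = M $$ (a,b)"
    proof (cases "a = p \<or> b = p")
      case True
      then show ?thesis using ab unfolding X_def Y_def Z_def u_def by auto
    next
      case False
      then have "Sub $$ (t a, t b) = M $$ (a, b)" using st[OF ab(1)] st[OF ab(2)] unfolding Sub_def by auto
      then show ?thesis using ab False unfolding X_def Y_def Z_def u_def by auto
    qed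
    then show "M $$ (a,b) = (X + Y + Z) $$ (a,b)" using ab X Y Z by simp
  qed (use M X Y Z in auto)
  have "vec_space.rank n M \<le> vec_space.rank n (X + Y) + vec_space.rank n Z"
    unfolding Meq by (rule vec_space.rank_subadditive) (use X Y Z in auto)
  moreover have "vec_space.rank n (X + Y) \<le> vec_space.rank n X + vec_space.rank n Y"
    by (rule vec_space.rank_subadditive[OF X Y])
  ultimately show "vec_space.rank (card V) M \<le> vec_space.rank (card (del_vertex_V V v)) M' + d + 2"
    unfolding cn using rX rY rZ rSub2 by linarith
qed


lemma mur_facts:
  fixes V :: "'a::linorder set"
  shows "\<alpha> \<noteq> 0 \<Longrightarrow> mur V E \<le> vec_space.rank (card V) (univ_adj_matrix V E \<alpha> \<beta> \<gamma> \<delta>)"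
    and "\<exists>\<alpha> \<beta> \<gamma> \<delta>. \<alpha> \<noteq> 0 \<and> mur V E = vec_space.rank (card V) (univ_adj_matrix V E \<alpha> \<beta> \<gamma> \<delta>)"
proof -
  define R where "R = {vec_space.rank (card V) (univ_adj_matrix V E \<alpha> \<beta> \<gamma> \<delta>) | \<alpha> \<beta> \<gamma> \<delta>. \<alpha> \<noteq> (0::real)}"
  have m: "mur V E = Min R" unfolding mur_def R_def ..
  have "R \<subseteq> {..card V}" unfolding R_def using vec_space.rank_le_nc[OF uam_carrier] by auto
  then have fR: "finite R" using finite_subset by blast
  have "vec_space.rank (card V) (univ_adj_matrix V E 1 0 0 0) \<in> R" unfolding R_def by fastforce
  then have neR: "R \<noteq> {}" by blast
  show "\<alpha> \<noteq> 0 \<Longrightarrow> mur V E \<le> vec_space.rank (card V) (univ_adj_matrix V E \<alpha> \<beta> \<gamma> \<delta>)"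
    unfolding m by (rule Min_le[OF fR]) (auto simp: R_def)
  have "Min R \<in> R" using Min_in[OF fR neR] .
  then show "\<exists>\<alpha> \<beta> \<gamma> \<delta>. \<alpha> \<noteq> 0 \<and> mur V E = vec_space.rank (card V) (univ_adj_matrix V E \<alpha> \<beta> \<gamma> \<delta>)"
    unfolding m R_def by auto
qed

theorem theorem17:
  fixes V :: "'a::linorder set" and E :: "'a \<Rightarrow> 'a \<Rightarrow> bool" and v :: 'a and d :: nat
  assumes "simple_graph V E" and "v \<in> V" and "d = degree V E v"
  shows "- int d \<le> int (mur V E) - int (mur (del_vertex_V V v) (del_vertex_E E v))
       \<and> int (mur V E) - int (mur (del_vertex_V V v) (del_vertex_E E v)) \<le> int d + 2"
proof
  obtain \<alpha> \<beta> \<gamma> \<delta> where a: "\<alpha> \<noteq> 0" and m: "mur V E = vec_space.rank (card V) (univ_adj_matrix V E \<alpha> \<beta> \<gamma> \<delta>)"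
    using mur_facts(2) by blast
  have "mur (del_vertex_V V v) (del_vertex_E E v) \<le> mur V E + d"
    using mur_facts(1)[OF a, of "del_vertex_V V v" "del_vertex_E E v" \<beta> \<gamma> \<delta>]
      key_ranks(1)[OF assms, of \<alpha> \<beta> \<gamma> \<delta>] m by linarith
  then show "- int d \<le> int (mur V E) - int (mur (del_vertex_V V v) (del_vertex_E E v))" by linarith
next
  obtain \<alpha> \<beta> \<gamma> \<delta> where a: "\<alpha> \<noteq> 0" and m: "mur (del_vertex_V V v) (del_vertex_E E v) =
      vec_space.rank (card (del_vertex_V V v)) (univ_adj_matrix (del_vertex_V V v) (del_vertex_E E v) \<alpha> \<beta> \<gamma> \<delta>)"
    using mur_facts(2) by blast
  have "mur V E \<le> mur (del_vertex_V V v) (del_vertex_E E v) + d + 2"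
    using mur_facts(1)[OF a, of V E \<beta> \<gamma> \<delta>]
      key_ranks(2)[OF assms, of \<alpha> \<beta> \<gamma> \<delta>] m by linarith
  then show "int (mur V E) - int (mur (del_vertex_V V v) (del_vertex_E E v)) \<le> int d + 2" by linarith
qed

end
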